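(* Assume $\mathcal M$ satisfies extensibility. Let $\lambda\in\mathbb R^A$, $\lambda>0$, whose partition of $A$ by equality of $\lambda_i$ is $S_1,\dots,S_{k-1},A'$ with $\lambda(S_1)<\dots<\lambda(S_{k-1})<\lambda(A')$. Let $S_k\subset A'$ and let $\lambda'\ge\lambda$ (componentwise, $\lambda'>0$) be such that its partition by equality of $\lambda'_i$ is $S_1,\dots,S_k,A'\setminus S_k$ with $\lambda'(S_1)<\dots<\lambda'(S_k)<\lambda'(A'\setminus S_k)$. Then for every $g<k$: $\mathrm{delay}_{S_g}(X)=\mathrm{delay}_{S_g}(X')$ for any optimal solution $X$ of $LP(\lambda)$ and any optimal solution $X'$ of $LP(\lambda')$; and for every $T\subseteq S_g$, $\max\{\mathrm{delay}_T(X): X\text{ optimal for }LP(\lambda)\}=\max\{\mathrm{delay}_T(X): X\text{ optimal for }LP(\lambda')\}$.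
   Context: A market $\mathcal M$: finite agent set $A$, finite goods set $G$ (supply $1$ each), finite index set $C$; agent $i$ has real coefficients $a_{ijk}$, requirements $r_{ik}\ge0$, delays $d_{ij}\ge0$. CC$(i)$: $\sum_ja_{ijk}x_{ij}\ge r_{ik}$ for all $k$, $x_{ij}\ge0$. An allocation $X\ge0$ is supply respecting if $\sum_ix_{ij}\le1$ for all $j$. For $S\subseteq A$, $X$ is jointly optimal for $S$ if it satisfies CC$(i)$ for all $i\in S$, is supply respecting, and minimizes $\sum_{i\in S}\sum_jd_{ij}x_{ij}$ among such allocations. Extensibility: for every $S\subset A$, every $X$ jointly optimal for $S$ and every $i\in A\setminus S$, there is $X'$ jointly optimal for $S\cup\{i\}$ with $\sum_jd_{i'j}x'_{i'j}=\sum_jd_{i'j}x_{i'j}$ for all $i'\in S$. $LP(\lambda)$: minimize $\sum_i\lambda_i\sum_jd_{ij}x_{ij}$ s.t. $\sum_ja_{ijk}x_{ij}\ge r_{ik}$ for all $(i,k)$, $\sum_ix_{ij}\le1$ for all $j$, $x\ge0$ (assumed feasible). $\mathrm{delay}_S(X)=\sum_{i\in S}\sum_jd_{ij}x_{ij}$; $\lambda(S)$ is the common value of $\lambda_i$ on $S$. *)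

theory Defs
  imports Main "HOL-Library.Extended_Real" Complex_Main
begin

text \<open>An allocation is a function
  X :: agent \<Rightarrow> good \<Rightarrow> real; only its values on A \<times> G matter.\<close>

definition supply_respecting :: "'a set \<Rightarrow> 'g set \<Rightarrow> ('a \<Rightarrow> 'g \<Rightarrow> real) \<Rightarrow> bool" where
  "supply_respecting A G X \<longleftrightarrow>
     (\<forall>i\<in>A. \<forall>j\<in>G. X i j \<ge> 0) \<and> (\<forall>j\<in>G. (\<Sum>i\<in>A. X i j) \<le> 1)"

definition CC :: "'g set \<Rightarrow> 'c set \<Rightarrow> ('a \<Rightarrow> 'g \<Rightarrow> 'c \<Rightarrow> real) \<Rightarrow> ('a \<Rightarrow> 'c \<Rightarrow> real)
                  \<Rightarrow> 'a \<Rightarrow> ('a \<Rightarrow> 'g \<Rightarrow> real) \<Rightarrow> bool" where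
  "CC G C a r i X \<longleftrightarrow> (\<forall>j\<in>G. X i j \<ge> 0) \<and> (\<forall>k\<in>C. (\<Sum>j\<in>G. a i j k * X i j) \<ge> r i k)"

definition delay :: "'g set \<Rightarrow> ('a \<Rightarrow> 'g \<Rightarrow> real) \<Rightarrow> 'a set \<Rightarrow> ('a \<Rightarrow> 'g \<Rightarrow> real) \<Rightarrow> real" where
  "delay G d S X = (\<Sum>i\<in>S. \<Sum>j\<in>G. d i j * X i j)"

definition jointly_optimal ::
  "'a set \<Rightarrow> 'g set \<Rightarrow> 'c set \<Rightarrow> ('a \<Rightarrow> 'g \<Rightarrow> 'c \<Rightarrow> real) \<Rightarrow> ('a \<Rightarrow> 'c \<Rightarrow> real)
   \<Rightarrow> ('a \<Rightarrow> 'g \<Rightarrow> real) \<Rightarrow> 'a set \<Rightarrow> ('a \<Rightarrow> 'g \<Rightarrow> real) \<Rightarrow> bool" where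
  "jointly_optimal A G C a r d S X \<longleftrightarrow>
     supply_respecting A G X \<and> (\<forall>i\<in>S. CC G C a r i X) \<and>
     (\<forall>Y. supply_respecting A G Y \<and> (\<forall>i\<in>S. CC G C a r i Y) \<longrightarrow> delay G d S X \<le> delay G d S Y)"

definition extensible ::
  "'a set \<Rightarrow> 'g set \<Rightarrow> 'c set \<Rightarrow> ('a \<Rightarrow> 'g \<Rightarrow> 'c \<Rightarrow> real) \<Rightarrow> ('a \<Rightarrow> 'c \<Rightarrow> real)
   \<Rightarrow> ('a \<Rightarrow> 'g \<Rightarrow> real) \<Rightarrow> bool" where
  "extensible A G C a r d \<longleftrightarrow>
     (\<forall>S X i. S \<subset> A \<longrightarrow> jointly_optimal A G C a r d S X \<longrightarrow> i \<in> A - S \<longrightarrow>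
        (\<exists>X'. jointly_optimal A G C a r d (insert i S) X' \<and>
              (\<forall>i'\<in>S. delay G d {i'} X' = delay G d {i'} X)))"

definition lp_feasible ::
  "'a set \<Rightarrow> 'g set \<Rightarrow> 'c set \<Rightarrow> ('a \<Rightarrow> 'g \<Rightarrow> 'c \<Rightarrow> real) \<Rightarrow> ('a \<Rightarrow> 'c \<Rightarrow> real)
   \<Rightarrow> ('a \<Rightarrow> 'g \<Rightarrow> real) \<Rightarrow> bool" where
  "lp_feasible A G C a r X \<longleftrightarrow> supply_respecting A G X \<and> (\<forall>i\<in>A. CC G C a r i X)"

definition lp_objective ::
  "'a set \<Rightarrow> 'g set \<Rightarrow> ('a \<Rightarrow> 'g \<Rightarrow> real) \<Rightarrow> ('a \<Rightarrow> real) \<Rightarrow> ('a \<Rightarrow> 'g \<Rightarrow> real) \<Rightarrow> real" where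
  "lp_objective A G d lam X = (\<Sum>i\<in>A. lam i * (\<Sum>j\<in>G. d i j * X i j))"

definition lp_optimal ::
  "'a set \<Rightarrow> 'g set \<Rightarrow> 'c set \<Rightarrow> ('a \<Rightarrow> 'g \<Rightarrow> 'c \<Rightarrow> real) \<Rightarrow> ('a \<Rightarrow> 'c \<Rightarrow> real)
   \<Rightarrow> ('a \<Rightarrow> 'g \<Rightarrow> real) \<Rightarrow> ('a \<Rightarrow> real) \<Rightarrow> ('a \<Rightarrow> 'g \<Rightarrow> real) \<Rightarrow> bool" where
  "lp_optimal A G C a r d lam X \<longleftrightarrow>
     lp_feasible A G C a r X \<and>
     (\<forall>Y. lp_feasible A G C a r Y \<longrightarrow> lp_objective A G d lam X \<le> lp_objective A G d lam Y)"

definition ordered_level_partition :: "('a \<Rightarrow> real) \<Rightarrow> 'a set \<Rightarrow> 'a set list \<Rightarrow> bool" where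
  "ordered_level_partition lam A Ps \<longleftrightarrow>
     (\<forall>n<length Ps. Ps ! n \<noteq> {}) \<and>
     (\<Union>(set Ps)) = A \<and>
     (\<forall>n<length Ps. \<forall>x\<in>Ps ! n. \<forall>y\<in>Ps ! n. lam x = lam y) \<and>
     (\<forall>n m. n < m \<and> m < length Ps \<longrightarrow> (\<forall>x\<in>Ps ! n. \<forall>y\<in>Ps ! m. lam x < lam y))"

end

theory Submission
  imports Defs
begin


definition pr :: "real set \<Rightarrow> real \<Rightarrow> real" where
  "pr L x = Max (insert 0 {v\<in>L. v < x})"

lemma pr_lt: assumes "finite L" "x > 0" shows "pr L x < x"
proof -
  have "Max (insert 0 {v\<in>L. v < x}) \<in> insert 0 {v\<in>L. v < x}"
    by (rule Max_in) (use assms in auto)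
  thus ?thesis unfolding pr_def using assms by auto
qed

lemma telescope:
  assumes "finite L" "\<forall>v\<in>L. v > 0" "x \<in> L"
  shows "(\<Sum>v\<in>{v\<in>L. v \<le> x}. v - pr L v) = x"
  using assms(3)
proof (induction "card {v\<in>L. v < x}" arbitrary: x rule: less_induct)
  case less
  show ?case
  proof (cases "{v\<in>L. v < x} = {}")
    case True
    then have "{v\<in>L. v \<le> x} = {x}" using less.prems by force
    moreover have "pr L x = 0" unfolding pr_def True by simp
    ultimately show ?thesis by simp
  next
    case False
    define p where "p = Max {v\<in>L. v < x}"
    have fin: "finite {v\<in>L. v < x}" using assms(1) by simp
    have pin: "p \<in> {v\<in>L. v < x}" unfolding p_def using Max_in[OF fin False] .
    have pge: "\<forall>v\<in>{v\<in>L. v < x}. v \<le> p" unfolding p_def using Max_ge[OF fin] by blast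
    have ppos: "p > 0" using pin assms(2) by auto
    have prx: "pr L x = p" unfolding pr_def p_def
      using Max_insert[OF fin False] ppos p_def by (simp add: max_def)
    have set_eq: "{v\<in>L. v \<le> x} = insert x {v\<in>L. v \<le> p}"
      using pge pin less.prems by force
    have xn: "x \<notin> {v\<in>L. v \<le> p}" using pin by auto
    have sub: "{v\<in>L. v < p} \<subset> {v\<in>L. v < x}" using pin by auto
    have "card {v\<in>L. v < p} < card {v\<in>L. v < x}" by (rule psubset_card_mono[OF fin sub])
    then have IH: "(\<Sum>v\<in>{v\<in>L. v \<le> p}. v - pr L v) = p" using less.hyps pin by blast
    have "(\<Sum>v\<in>{v\<in>L. v \<le> x}. v - pr L v) = (x - pr L x) + (\<Sum>v\<in>{v\<in>L. v \<le> p}. v - pr L v)"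
      unfolding set_eq using xn assms(1) by (simp add: sum.insert)
    then show ?thesis using IH prx by simp
  qed
qed

lemma obj_decomp:
  assumes "finite A" "finite G" "\<forall>i\<in>A. w i > 0"
  shows "lp_objective A G d w X =
    (\<Sum>v\<in>w`A. (v - pr (w`A) v) * delay G d {i\<in>A. v \<le> w i} X)"
proof -
  let ?D = "\<lambda>i. \<Sum>j\<in>G. d i j * X i j"
  let ?L = "w`A"
  have "(\<Sum>v\<in>?L. (v - pr ?L v) * delay G d {i\<in>A. v \<le> w i} X)
      = (\<Sum>v\<in>?L. \<Sum>i\<in>{i\<in>A. v \<le> w i}. (v - pr ?L v) * ?D i)"
    unfolding delay_def by (simp add: sum_distrib_left)
  also have "\<dots> = (\<Sum>i\<in>A. \<Sum>v\<in>{v\<in>?L. v \<le> w i}. (v - pr ?L v) * ?D i)"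
    using sum.swap_restrict[of ?L A "\<lambda>v i. (v - pr ?L v) * ?D i" "\<lambda>v i. v \<le> w i"] assms(1)
    by simp
  also have "\<dots> = (\<Sum>i\<in>A. (\<Sum>v\<in>{v\<in>?L. v \<le> w i}. (v - pr ?L v)) * ?D i)"
    by (simp add: sum_distrib_right)
  also have "\<dots> = (\<Sum>i\<in>A. w i * ?D i)"
    apply (rule sum.cong, simp)
    using telescope[of ?L] assms by auto
  finally show ?thesis unfolding lp_objective_def by simp
qed

definition optP where
  "optP A G C a r d P X \<longleftrightarrow> (\<forall>Y. supply_respecting A G Y \<and> (\<forall>i\<in>P. CC G C a r i Y) \<longrightarrow> delay G d P X \<le> delay G d P Y)"

lemma char_a:
  assumes "finite A" "finite G" "\<forall>i\<in>A. w i > 0" "lp_feasible A G C a r Z"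
    "\<forall>v\<in>w`A. optP A G C a r d {i\<in>A. v \<le> w i} Z"
  shows "lp_optimal A G C a r d w Z"
  unfolding lp_optimal_def
proof (intro conjI allI impI)
  show "lp_feasible A G C a r Z" by fact
  fix Y assume Y: "lp_feasible A G C a r Y"
  have "(\<Sum>v\<in>w`A. (v - pr (w`A) v) * delay G d {i\<in>A. v \<le> w i} Z)
     \<le> (\<Sum>v\<in>w`A. (v - pr (w`A) v) * delay G d {i\<in>A. v \<le> w i} Y)"
  proof (rule sum_mono)
    fix v assume v: "v \<in> w`A"
    have "v - pr (w`A) v > 0" using pr_lt[of "w`A" v] v assms(1,3) by auto
    moreover have "delay G d {i\<in>A. v \<le> w i} Z \<le> delay G d {i\<in>A. v \<le> w i} Y"
      using assms(5) v Y unfolding optP_def lp_feasible_def by auto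
    ultimately show "(v - pr (w`A) v) * delay G d {i\<in>A. v \<le> w i} Z
     \<le> (v - pr (w`A) v) * delay G d {i\<in>A. v \<le> w i} Y" by (simp add: mult_left_mono)
  qed
  then show "lp_objective A G d w Z \<le> lp_objective A G d w Y"
    using obj_decomp[OF assms(1,2,3)] by simp
qed

lemma char_b:
  assumes "finite A" "finite G" "\<forall>i\<in>A. w i > 0" "lp_feasible A G C a r Z"
    "\<forall>v\<in>w`A. optP A G C a r d {i\<in>A. v \<le> w i} Z"
    "lp_optimal A G C a r d w X" "v \<in> w`A"
  shows "optP A G C a r d {i\<in>A. v \<le> w i} X"
proof -
  let ?c = "\<lambda>v. v - pr (w`A) v"
  let ?f = "\<lambda>X v. ?c v * delay G d {i\<in>A. v \<le> w i} X"
  have Xf: "lp_feasible A G C a r X" using assms(6) unfolding lp_optimal_def by simp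
  have cpos: "\<And>v. v \<in> w`A \<Longrightarrow> ?c v > 0" using pr_lt assms(1,3) by fastforce
  have le: "\<forall>v\<in>w`A. ?f Z v \<le> ?f X v"
  proof
    fix v assume v: "v \<in> w`A"
    have "delay G d {i\<in>A. v \<le> w i} Z \<le> delay G d {i\<in>A. v \<le> w i} X"
      using assms(5) v Xf unfolding optP_def lp_feasible_def by auto
    then show "?f Z v \<le> ?f X v" using cpos[OF v] by (simp add: mult_left_mono)
  qed
  have "lp_objective A G d w X \<le> lp_objective A G d w Z"
    using assms(6,4) unfolding lp_optimal_def by blast
  then have sle: "sum (?f X) (w`A) \<le> sum (?f Z) (w`A)"
    unfolding obj_decomp[OF assms(1,2,3)] .
  have eq: "\<forall>v\<in>w`A. ?f Z v = ?f X v"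
  proof (rule ccontr)
    assume "\<not> (\<forall>v\<in>w`A. ?f Z v = ?f X v)"
    then have "\<exists>v\<in>w`A. ?f Z v < ?f X v" using le by force
    then have "sum (?f Z) (w`A) < sum (?f X) (w`A)"
      using sum_strict_mono_ex1[of "w`A" "?f Z" "?f X"] le assms(1) by blast
    then show False using sle by simp
  qed
  have "delay G d {i\<in>A. v \<le> w i} Z = delay G d {i\<in>A. v \<le> w i} X"
    using eq assms(7) cpos[OF assms(7)] by auto
  moreover have "optP A G C a r d {i\<in>A. v \<le> w i} Z" using assms(5,7) by blast
  ultimately show ?thesis unfolding optP_def by simp
qed




lemma delay_singles: "delay G d S X = (\<Sum>i\<in>S. delay G d {i} X)"
  unfolding delay_def by simp

lemma delay_transfer:
  assumes "\<forall>i\<in>P. delay G d {i} X' = delay G d {i} X"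
  shows "delay G d P X' = delay G d P X"
  using assms by (simp add: delay_singles[of G d P])

lemma chain_sol:
  assumes fin: "finite A" and ext: "extensible A G C a r d"
    and ch: "\<forall>P\<in>F. \<forall>Q\<in>F. P \<subseteq> Q \<or> Q \<subseteq> P"
    and BA: "B \<subseteq> A"
  shows "\<exists>X. jointly_optimal A G C a r d B X \<and> (\<forall>P\<in>F. optP A G C a r d (P \<inter> B) X)"
  using BA
proof (induction "card B" arbitrary: B rule: less_induct)
  case less
  show ?case
  proof (cases "B = {}")
    case True
    have "jointly_optimal A G C a r d B (\<lambda>_ _. 0)"
      unfolding jointly_optimal_def supply_respecting_def True delay_def by simp
    moreover have "\<forall>P\<in>F. optP A G C a r d (P \<inter> B) (\<lambda>_ _. 0)"
      unfolding optP_def True delay_def by simp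
    ultimately show ?thesis by blast
  next
    case False
    have finB: "finite B" using less.prems fin finite_subset by blast
    define K where "K = {P \<inter> B | P. P \<in> F \<and> \<not> B \<subseteq> P}"
    have Kfin: "finite K" unfolding K_def
      by (rule finite_subset[of _ "Pow B"]) (use finB in auto)
    have Kch: "\<forall>P\<in>K. \<forall>Q\<in>K. P \<subseteq> Q \<or> Q \<subseteq> P" unfolding K_def using ch by blast
    have Kprop: "\<forall>P\<in>K. P \<subset> B" unfolding K_def by blast
    obtain i where iB: "i \<in> B" and iK: "\<forall>P\<in>K. i \<notin> P"
    proof (cases "K = {}")
      case True then show ?thesis using that False by blast
    next
      case Kne: False
      have "Max (card ` K) \<in> card ` K" using Kfin Kne by simp
      then obtain M where MK: "M \<in> K" and Mc: "card M = Max (card ` K)" by auto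
      have "\<forall>Q\<in>K. Q \<subseteq> M"
      proof
        fix Q assume QK: "Q \<in> K"
        have "card Q \<le> card M" using Mc QK Kfin by simp
        moreover have "finite Q" using QK Kprop finB finite_subset by blast
        ultimately show "Q \<subseteq> M" using Kch MK QK card_subset_eq by (metis order_antisym card_mono)
      qed
      moreover obtain i where "i \<in> B" "i \<notin> M" using Kprop MK by blast
      ultimately show ?thesis using that by blast
    qed
    define B0 where "B0 = B - {i}"
    have "card B0 < card B" unfolding B0_def using card_Diff1_less[OF finB iB] .
    then obtain X0 where X0: "jointly_optimal A G C a r d B0 X0"
      and X0F: "\<forall>P\<in>F. optP A G C a r d (P \<inter> B0) X0"
      using less.hyps[of B0] less.prems unfolding B0_def by blast
    have sub: "B0 \<subset> A" unfolding B0_def using iB less.prems by blast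
    have iA: "i \<in> A - B0" unfolding B0_def using iB less.prems by blast
    obtain X where X: "jointly_optimal A G C a r d (insert i B0) X"
      and Xd: "\<forall>i'\<in>B0. delay G d {i'} X = delay G d {i'} X0"
      using ext sub iA X0 unfolding extensible_def by blast
    have insB: "insert i B0 = B" unfolding B0_def using iB by blast
    have "\<forall>P\<in>F. optP A G C a r d (P \<inter> B) X"
    proof
      fix P assume PF: "P \<in> F"
      show "optP A G C a r d (P \<inter> B) X"
      proof (cases "B \<subseteq> P")
        case True
        then have "P \<inter> B = B" by blast
        then show ?thesis using X insB unfolding jointly_optimal_def optP_def by simp
      next
        case False
        then have "P \<inter> B \<in> K" unfolding K_def using PF by blast
        then have eq: "P \<inter> B = P \<inter> B0" using iK unfolding B0_def by blast
        have "delay G d (P \<inter> B0) X = delay G d (P \<inter> B0) X0"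
          by (rule delay_transfer) (use Xd in blast)
        then show ?thesis using X0F PF unfolding eq optP_def by simp
      qed
    qed
    then show ?thesis using X insB by blast
  qed
qed




lemma greatest_dom:
  fixes f :: "'x \<Rightarrow> real"
  assumes "\<forall>X. P1 X \<longrightarrow> (\<exists>Y. P2 Y \<and> f X \<le> f Y)"
      and "\<forall>Y. P2 Y \<longrightarrow> (\<exists>X. P1 X \<and> f Y \<le> f X)"
  shows "(GREATEST v. \<exists>X. P1 X \<and> v = f X) = (GREATEST v. \<exists>X. P2 X \<and> v = f X)"
proof -
  have "(\<lambda>x. (\<exists>X. P1 X \<and> x = f X) \<and> (\<forall>y. (\<exists>X. P1 X \<and> y = f X) \<longrightarrow> x \<ge> y))
      = (\<lambda>x. (\<exists>X. P2 X \<and> x = f X) \<and> (\<forall>y. (\<exists>X. P2 X \<and> y = f X) \<longrightarrow> x \<ge> y))"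
  proof (rule ext, rule iffI)
    fix x assume h: "(\<exists>X. P1 X \<and> x = f X) \<and> (\<forall>y. (\<exists>X. P1 X \<and> y = f X) \<longrightarrow> x \<ge> y)"
    then obtain X where "P1 X" "x = f X" by blast
    then obtain Y where "P2 Y" "x \<le> f Y" using assms(1) by blast
    moreover obtain X' where "P1 X'" "f Y \<le> f X'" using assms(2) \<open>P2 Y\<close> by blast
    ultimately have "x = f Y" using h by (metis order_antisym order_trans)
    moreover have "\<forall>y. (\<exists>X. P2 X \<and> y = f X) \<longrightarrow> x \<ge> y"
    proof (intro allI impI)
      fix y assume "\<exists>X. P2 X \<and> y = f X"
      then obtain Z where "P2 Z" "y = f Z" by blast
      then obtain Z' where "P1 Z'" "f Z \<le> f Z'" using assms by blast
      moreover have "x \<ge> f Z'" using h \<open>P1 Z'\<close> by blast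
      ultimately show "x \<ge> y" using \<open>y = f Z\<close> by linarith
    qed
    ultimately show "(\<exists>X. P2 X \<and> x = f X) \<and> (\<forall>y. (\<exists>X. P2 X \<and> y = f X) \<longrightarrow> x \<ge> y)"
      using \<open>P2 Y\<close> by blast
  next
    fix x assume h: "(\<exists>X. P2 X \<and> x = f X) \<and> (\<forall>y. (\<exists>X. P2 X \<and> y = f X) \<longrightarrow> x \<ge> y)"
    then obtain X where "P2 X" "x = f X" by blast
    then obtain Y where "P1 Y" "x \<le> f Y" using assms(2) by blast
    moreover obtain X' where "P2 X'" "f Y \<le> f X'" using assms(1) \<open>P1 Y\<close> by blast
    ultimately have "x = f Y" using h by (metis order_antisym order_trans)
    moreover have "\<forall>y. (\<exists>X. P1 X \<and> y = f X) \<longrightarrow> x \<ge> y"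
    proof (intro allI impI)
      fix y assume "\<exists>X. P1 X \<and> y = f X"
      then obtain Z where "P1 Z" "y = f Z" by blast
      then obtain Z' where "P2 Z'" "f Z \<le> f Z'" using assms by blast
      moreover have "x \<ge> f Z'" using h \<open>P2 Z'\<close> by blast
      ultimately show "x \<ge> y" using \<open>y = f Z\<close> by linarith
    qed
    ultimately show "(\<exists>X. P1 X \<and> x = f X) \<and> (\<forall>y. (\<exists>X. P1 X \<and> y = f X) \<longrightarrow> x \<ge> y)"
      using \<open>P1 Y\<close> by blast
  qed
  then show ?thesis unfolding Greatest_def by simp
qed

lemma upclosed_eq:
  fixes w :: "'a \<Rightarrow> real"
  assumes "finite A" "P \<subseteq> A" "P \<noteq> {}" "\<forall>i\<in>P. \<forall>j\<in>A. w i \<le> w j \<longrightarrow> j \<in> P"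
  shows "P = {i\<in>A. Min (w`P) \<le> w i}" "Min (w`P) \<in> w`A"
proof -
  have fin: "finite (w`P)" using assms(1,2) finite_subset by blast
  have "Min (w`P) \<in> w`P" using fin assms(3) by simp
  then obtain p where p: "p \<in> P" "w p = Min (w`P)" by auto
  show "P = {i\<in>A. Min (w`P) \<le> w i}"
    using assms(2,4) p fin by auto
  have "w p \<in> w`A" using p(1) assms(2) by blast
  then show "Min (w`P) \<in> w`A" using p(2) by simp
qed

lemma optP_empty: "optP A G C a r d {} X"
  unfolding optP_def delay_def by simp

lemma optP_thresh:
  assumes "finite A" "finite G" "\<forall>i\<in>A. w i > 0" "lp_feasible A G C a r Z"
    "\<forall>v\<in>w`A. optP A G C a r d {i\<in>A. v \<le> w i} Z"
    "lp_optimal A G C a r d w X"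
    "P \<subseteq> A" "\<forall>i\<in>P. \<forall>j\<in>A. w i \<le> w j \<longrightarrow> j \<in> P"
  shows "optP A G C a r d P X"
proof (cases "P = {}")
  case True then show ?thesis using optP_empty by simp
next
  case False
  note u = upclosed_eq[OF assms(1,7) False assms(8)]
  show ?thesis using char_b[OF assms(1-6) u(2)] u(1) by simp
qed

lemma optP_eq:
  assumes "optP A G C a r d P X" "optP A G C a r d P Y"
    "lp_feasible A G C a r X" "lp_feasible A G C a r Y" "P \<subseteq> A"
  shows "delay G d P X = delay G d P Y"
proof -
  have "delay G d P X \<le> delay G d P Y" using assms(1,4,5) unfolding optP_def lp_feasible_def by blast
  moreover have "delay G d P Y \<le> delay G d P X" using assms(2,3,5) unfolding optP_def lp_feasible_def by blast
  ultimately show ?thesis by linarith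
qed

lemma delay_split:
  assumes "finite A" "T \<subseteq> U" "U \<subseteq> A"
  shows "delay G d U X = delay G d T X + delay G d (U - T) X"
proof -
  have "finite U" using assms finite_subset by blast
  then show ?thesis unfolding delay_def using sum.subset_diff[OF assms(2)] by (simp add: add.commute)
qed




lemma main_abs:
  fixes lam lam' :: "'a \<Rightarrow> real"
  assumes fin: "finite A" "finite G" and ext: "extensible A G C a r d"
    and pos: "\<forall>i\<in>A. lam i > 0" and pos': "\<forall>i\<in>A. lam' i > 0"
    and M: "\<forall>i\<in>A. \<forall>j\<in>A. lam i < lam j \<longrightarrow> lam' i < lam' j"
    and xS: "x \<in> Sg" and SA: "Sg \<subseteq> A"
    and E: "Sg = {i\<in>A. lam i = lam x}" and E': "Sg = {i\<in>A. lam' i = lam' x}"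
  shows "(\<forall>X X'. lp_optimal A G C a r d lam X \<longrightarrow> lp_optimal A G C a r d lam' X' \<longrightarrow>
                    delay G d Sg X = delay G d Sg X') \<and>
           (\<forall>T. T \<subseteq> Sg \<longrightarrow>
              (GREATEST v. \<exists>X. lp_optimal A G C a r d lam X \<and> v = delay G d T X)
            = (GREATEST v. \<exists>X. lp_optimal A G C a r d lam' X \<and> v = delay G d T X))"
proof -
  have xA: "x \<in> A" using xS SA by blast
  define U where "U = {i\<in>A. lam x \<le> lam i}"
  define Us where "Us = {i\<in>A. lam x < lam i}"
  have U': "U = {i\<in>A. lam' x \<le> lam' i}"
  proof -
    have "\<And>i. i \<in> A \<Longrightarrow> lam x \<le> lam i \<longleftrightarrow> lam' x \<le> lam' i"
    proof -
      fix i assume iA: "i \<in> A"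
      show "lam x \<le> lam i \<longleftrightarrow> lam' x \<le> lam' i"
      proof
        assume h: "lam x \<le> lam i"
        show "lam' x \<le> lam' i"
        proof (cases "lam x = lam i")
          case True then have "i \<in> Sg" using E iA by simp
          then show ?thesis using E' by simp
        next
          case False then show ?thesis using M iA xA h by force
        qed
      next
        assume "lam' x \<le> lam' i" then show "lam x \<le> lam i" using M iA xA by force
      qed
    qed
    then show ?thesis unfolding U_def by blast
  qed
  have Us': "Us = {i\<in>A. lam' x < lam' i}"
  proof -
    have "\<And>i. i \<in> A \<Longrightarrow> lam x < lam i \<longleftrightarrow> lam' x < lam' i"
    proof -
      fix i assume iA: "i \<in> A"
      show "lam x < lam i \<longleftrightarrow> lam' x < lam' i"
      proof
        assume h: "lam x < lam i"
        show "lam' x < lam' i" using M iA xA h by force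
      next
        assume h: "lam' x < lam' i"
        show "lam x < lam i"
        proof (rule ccontr)
          assume "\<not> lam x < lam i"
          then have "lam i < lam x \<or> lam i = lam x" by auto
          then show False
          proof
            assume "lam i < lam x" then show False using M iA xA h by force
          next
            assume "lam i = lam x" then have "i \<in> Sg" using E iA by simp
            then show False using E' h by simp
          qed
        qed
      qed
    qed
    then show ?thesis unfolding Us_def by blast
  qed
  define cl where "cl = (\<lambda>w P. P \<subseteq> A \<and> (\<forall>i\<in>P. \<forall>j\<in>A. (w i :: real) \<le> w j \<longrightarrow> j \<in> P))"
  have cl_lam: "\<And>P. cl lam P \<Longrightarrow> cl lam' P"
  proof -
    fix P assume h: "cl lam P"
    show "cl lam' P" unfolding cl_def
    proof (intro conjI ballI impI)
      show "P \<subseteq> A" using h unfolding cl_def by blast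
      fix i j assume ij: "i \<in> P" "j \<in> A" "lam' i \<le> lam' j"
      have "i \<in> A" using h ij unfolding cl_def by blast
      then have "lam i \<le> lam j" using M ij by force
      then show "j \<in> P" using h ij unfolding cl_def by blast
    qed
  qed
  have cl_up: "\<And>w v. cl w {i\<in>A. (v::real) \<le> w i}" unfolding cl_def by auto
  have cl_sup: "\<And>w v. cl w {i\<in>A. (v::real) < w i}" unfolding cl_def by auto
  have U_cl: "cl lam U" "cl lam' U" unfolding U_def[symmetric] using cl_up U' U_def by metis+
  have Us_cl: "cl lam Us" "cl lam' Us" using cl_sup Us' Us_def by metis+
  have SgU: "Sg \<subseteq> U" unfolding U_def using E by auto
  have UsD: "U - Sg = Us" unfolding U_def Us_def using E by auto
  have UA: "U \<subseteq> A" unfolding U_def by auto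
  have Zex: "\<exists>Z. lp_feasible A G C a r Z \<and> (\<forall>P. cl lam' P \<longrightarrow> optP A G C a r d P Z)
              \<and> optP A G C a r d (U - T) Z" if "T \<subseteq> Sg" for T
  proof -
    define F where "F = insert (U - T) {P. cl lam' P}"
    have ch: "\<forall>P\<in>F. \<forall>Q\<in>F. P \<subseteq> Q \<or> Q \<subseteq> P"
    proof -
      have c1: "P \<subseteq> Q \<or> Q \<subseteq> P" if "cl lam' P" "cl lam' Q" for P Q
      proof (rule ccontr)
        assume "\<not> (P \<subseteq> Q \<or> Q \<subseteq> P)"
        then obtain p q where pq: "p \<in> P" "p \<notin> Q" "q \<in> Q" "q \<notin> P" by blast
        have "p \<in> A" "q \<in> A" using pq that unfolding cl_def by blast+
        show False
        proof (cases "lam' p \<le> lam' q")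
          case True then show False using that pq \<open>q \<in> A\<close> unfolding cl_def by blast
        next
          case False then show False using that pq \<open>p \<in> A\<close> unfolding cl_def by force
        qed
      qed
      have c2: "P \<subseteq> U - T \<or> U - T \<subseteq> P" if "cl lam' P" for P
      proof (cases "P \<subseteq> Us")
        case True
        then show ?thesis using \<open>T \<subseteq> Sg\<close> UsD by blast
      next
        case False
        then obtain p where p: "p \<in> P" "p \<notin> Us" by blast
        have "p \<in> A" using that p unfolding cl_def by blast
        then have "lam' p \<le> lam' x" using p Us' by auto
        then have "x \<in> P" using that p xA unfolding cl_def by blast
        then have "U \<subseteq> P" using that unfolding U' cl_def by blast
        then show ?thesis by blast
      qed
      show ?thesis unfolding F_def using c1 c2 by blast
    qed
    obtain Z where Z: "jointly_optimal A G C a r d A Z" "\<forall>P\<in>F. optP A G C a r d (P \<inter> A) Z"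
      using chain_sol[OF fin(1) ext ch] by blast
    have "lp_feasible A G C a r Z" using Z(1) unfolding jointly_optimal_def lp_feasible_def by blast
    moreover have "\<forall>P. cl lam' P \<longrightarrow> optP A G C a r d P Z"
    proof (intro allI impI)
      fix P assume "cl lam' P"
      then have "P \<in> F" "P \<inter> A = P" unfolding F_def cl_def by auto
      then show "optP A G C a r d P Z" using Z(2) by metis
    qed
    moreover have "optP A G C a r d (U - T) Z" using Z(2) UA unfolding F_def
      by (metis Int_absorb2 Diff_subset insertI1 order_trans)
    ultimately show ?thesis by blast
  qed
  have optl: "optP A G C a r d P X" if "lp_optimal A G C a r d lam X" "cl lam P" for P X
  proof -
    obtain Z where Z: "lp_feasible A G C a r Z" "\<forall>P. cl lam' P \<longrightarrow> optP A G C a r d P Z"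
      using Zex[of "{}"] by blast
    have "\<forall>v\<in>lam`A. optP A G C a r d {i\<in>A. v \<le> lam i} Z" using Z(2) cl_up cl_lam by blast
    then show ?thesis using optP_thresh[OF fin pos Z(1) _ that(1)] that(2) unfolding cl_def by blast
  qed
  have optl': "optP A G C a r d P X" if "lp_optimal A G C a r d lam' X" "cl lam' P" for P X
  proof -
    obtain Z where Z: "lp_feasible A G C a r Z" "\<forall>P. cl lam' P \<longrightarrow> optP A G C a r d P Z"
      using Zex[of "{}"] by blast
    have "\<forall>v\<in>lam'`A. optP A G C a r d {i\<in>A. v \<le> lam' i} Z" using Z(2) cl_up by blast
    then show ?thesis using optP_thresh[OF fin pos' Z(1) _ that(1)] that(2) unfolding cl_def by blast
  qed
  have feas: "lp_feasible A G C a r X" if "lp_optimal A G C a r d w X" for w X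
    using that unfolding lp_optimal_def by blast
  have part1: "\<forall>X X'. lp_optimal A G C a r d lam X \<longrightarrow> lp_optimal A G C a r d lam' X' \<longrightarrow>
                    delay G d Sg X = delay G d Sg X'"
  proof (intro allI impI)
    fix X X' assume X: "lp_optimal A G C a r d lam X" and X': "lp_optimal A G C a r d lam' X'"
    have e1: "delay G d U X = delay G d U X'"
      using optP_eq[OF optl[OF X U_cl(1)] optl'[OF X' U_cl(2)] feas[OF X] feas[OF X'] UA] .
    have e2: "delay G d Us X = delay G d Us X'"
      using optP_eq[OF optl[OF X Us_cl(1)] optl'[OF X' Us_cl(2)] feas[OF X] feas[OF X']] UA UsD by blast
    show "delay G d Sg X = delay G d Sg X'"
      using delay_split[OF fin(1) SgU UA, where X=X] delay_split[OF fin(1) SgU UA, where X=X'] e1 e2 UsD by simp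
  qed
  have dom: "\<exists>Z. lp_optimal A G C a r d lam Z \<and> lp_optimal A G C a r d lam' Z \<and> delay G d T X \<le> delay G d T Z"
    if T: "T \<subseteq> Sg" and X: "lp_feasible A G C a r X" "optP A G C a r d U X" for T X
  proof -
    obtain Z where Z: "lp_feasible A G C a r Z" "\<forall>P. cl lam' P \<longrightarrow> optP A G C a r d P Z"
      "optP A G C a r d (U - T) Z" using Zex[OF T] by blast
    have o1: "lp_optimal A G C a r d lam Z"
      by (rule char_a[OF fin pos Z(1)]) (use Z(2) cl_up cl_lam in blast)
    have o2: "lp_optimal A G C a r d lam' Z"
      by (rule char_a[OF fin pos' Z(1)]) (use Z(2) cl_up in blast)
    have e1: "delay G d U X = delay G d U Z"
      using optP_eq[OF X(2) _ X(1) Z(1) UA] Z(2) U_cl by blast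
    have e2: "delay G d (U - T) Z \<le> delay G d (U - T) X"
      using Z(3) X(1) UA unfolding optP_def lp_feasible_def by blast
    have TU: "T \<subseteq> U" using T SgU by blast
    have "delay G d T X \<le> delay G d T Z"
      using delay_split[OF fin(1) TU UA, where X=X] delay_split[OF fin(1) TU UA, where X=Z] e1 e2 by simp
    then show ?thesis using o1 o2 by blast
  qed
  have part2: "\<forall>T. T \<subseteq> Sg \<longrightarrow>
              (GREATEST v. \<exists>X. lp_optimal A G C a r d lam X \<and> v = delay G d T X)
            = (GREATEST v. \<exists>X. lp_optimal A G C a r d lam' X \<and> v = delay G d T X)"
  proof (intro allI impI)
    fix T assume T: "T \<subseteq> Sg"
    show "(GREATEST v. \<exists>X. lp_optimal A G C a r d lam X \<and> v = delay G d T X)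
            = (GREATEST v. \<exists>X. lp_optimal A G C a r d lam' X \<and> v = delay G d T X)"
    proof (rule greatest_dom)
      show "\<forall>X. lp_optimal A G C a r d lam X \<longrightarrow> (\<exists>Y. lp_optimal A G C a r d lam' Y \<and> delay G d T X \<le> delay G d T Y)"
        using dom[OF T] feas optl U_cl by blast
      show "\<forall>X. lp_optimal A G C a r d lam' X \<longrightarrow> (\<exists>Y. lp_optimal A G C a r d lam Y \<and> delay G d T X \<le> delay G d T Y)"
        using dom[OF T] feas optl' U_cl by blast
    qed
  qed
  show ?thesis using part1 part2 by blast
qed




lemma olp_index:
  assumes "ordered_level_partition w A Ps" "n < length Ps" "m < length Ps" "i \<in> Ps!n" "j \<in> Ps!m"
  shows "(w i < w j \<longleftrightarrow> n < m)" "(w i = w j \<longleftrightarrow> n = m)"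
proof -
  have c: "\<forall>n m. n < m \<and> m < length Ps \<longrightarrow> (\<forall>x\<in>Ps ! n. \<forall>y\<in>Ps ! m. w x < w y)"
    and e: "\<forall>n<length Ps. \<forall>x\<in>Ps ! n. \<forall>y\<in>Ps ! n. w x = w y"
    using assms(1) unfolding ordered_level_partition_def by blast+
  have "n < m \<or> n = m \<or> m < n" by auto
  then show "(w i < w j \<longleftrightarrow> n < m)" "(w i = w j \<longleftrightarrow> n = m)"
    using c e assms(2-5) by (metis less_irrefl order_less_asym)+
qed

lemma olp_cover:
  assumes "ordered_level_partition w A Ps" "i \<in> A"
  shows "\<exists>n<length Ps. i \<in> Ps!n"
proof -
  have "\<Union>(set Ps) = A" using assms(1) unfolding ordered_level_partition_def by blast
  then obtain P where "P \<in> set Ps" "i \<in> P" using assms(2) by blast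
  then show ?thesis by (metis in_set_conv_nth)
qed

lemma olp_sub:
  assumes "ordered_level_partition w A Ps" "n < length Ps"
  shows "Ps!n \<subseteq> A" "Ps!n \<noteq> {}"
  using assms unfolding ordered_level_partition_def by (auto intro: nth_mem)




theorem lemmaF5:
  fixes A :: "'a set" and G :: "'g set" and C :: "'c set"
    and a :: "'a \<Rightarrow> 'g \<Rightarrow> 'c \<Rightarrow> real" and r :: "'a \<Rightarrow> 'c \<Rightarrow> real" and d :: "'a \<Rightarrow> 'g \<Rightarrow> real"
    and lam lam' :: "'a \<Rightarrow> real" and S :: "nat \<Rightarrow> 'a set" and A' :: "'a set" and k :: nat
  assumes fin: "finite A" "finite G" "finite C"
    and r_nonneg: "\<forall>i\<in>A. \<forall>c\<in>C. r i c \<ge> 0"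
    and d_nonneg: "\<forall>i\<in>A. \<forall>j\<in>G. d i j \<ge> 0"
    and lp_feas: "\<exists>X. lp_feasible A G C a r X"
    and ext: "extensible A G C a r d"
    and lam_pos: "\<forall>i\<in>A. lam i > 0"
    and k_pos: "k \<ge> 1"
    and part: "ordered_level_partition lam A (map S [1..<k] @ [A'])"
    and Sk: "S k \<subset> A'"
    and lam'_ge: "\<forall>i\<in>A. lam' i \<ge> lam i"
    and lam'_pos: "\<forall>i\<in>A. lam' i > 0"
    and part': "ordered_level_partition lam' A (map S [1..<k+1] @ [A' - S k])"
  shows "\<forall>g. 1 \<le> g \<and> g < k \<longrightarrow>
           (\<forall>X X'. lp_optimal A G C a r d lam X \<longrightarrow> lp_optimal A G C a r d lam' X' \<longrightarrow>
                    delay G d (S g) X = delay G d (S g) X') \<and>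
           (\<forall>T. T \<subseteq> S g \<longrightarrow>
              (GREATEST v. \<exists>X. lp_optimal A G C a r d lam X \<and> v = delay G d T X)
            = (GREATEST v. \<exists>X. lp_optimal A G C a r d lam' X \<and> v = delay G d T X))"
proof (intro allI impI)
  fix g assume g: "1 \<le> g \<and> g < k"
  define Ps where "Ps = map S [1..<k] @ [A']"
  define Ps' where "Ps' = map S [1..<k+1] @ [A' - S k]"
  have pt: "ordered_level_partition lam A Ps" using part unfolding Ps_def .
  have pt': "ordered_level_partition lam' A Ps'" using part' unfolding Ps'_def .
  have lenP: "length Ps = k" using k_pos by (simp add: Ps_def)
  have lenP': "length Ps' = k+1" by (simp add: Ps'_def)
  have Pn: "\<And>n. n < k-1 \<Longrightarrow> Ps!n = S (Suc n)" by (simp add: Ps_def nth_append)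
  have Pk: "Ps!(k-1) = A'" using k_pos by (simp add: Ps_def nth_append)
  have P'n: "Ps'!n = S (Suc n)" if nk: "n < k" for n
  proof (cases "n < k - 1")
    case True then show ?thesis using nk k_pos by (simp add: Ps'_def nth_append)
  next
    case False
    then have "Suc n = k" using nk by simp
    then show ?thesis using nk False by (simp add: Ps'_def nth_append)
  qed
  have P'k1: "Ps'!(k-1) = S k" using P'n[of "k-1"] k_pos by simp
  have P'k: "Ps'!k = A' - S k" by (simp add: Ps'_def nth_append)
  have gl: "g - 1 < k - 1" "g - 1 < k" using g by auto
  have gP: "Ps!(g-1) = S g" "Ps'!(g-1) = S g" using Pn[OF gl(1)] P'n[OF gl(2)] g by auto
  have gL: "g-1 < length Ps" "g-1 < length Ps'" using gl lenP lenP' by auto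
  have SA: "S g \<subseteq> A" using olp_sub(1)[OF pt, of "g-1"] gP lenP gl by simp
  obtain x where xS: "x \<in> S g" using olp_sub(2)[OF pt, of "g-1"] gP lenP gl by auto
  have E: "S g = {i\<in>A. lam i = lam x}"
  proof
    show "S g \<subseteq> {i\<in>A. lam i = lam x}"
    proof
      fix i assume i: "i \<in> S g"
      have "lam i = lam x" using olp_index(2)[OF pt gL(1) gL(1), of i x] i xS gP(1) by simp
      then show "i \<in> {i\<in>A. lam i = lam x}" using i SA by blast
    qed
    show "{i\<in>A. lam i = lam x} \<subseteq> S g"
    proof
      fix i assume i: "i \<in> {i\<in>A. lam i = lam x}"
      then obtain m where m: "m < length Ps" "i \<in> Ps!m" using olp_cover[OF pt] by blast
      then have "m = g - 1" using olp_index(2)[OF pt m(1) gL(1) m(2), of x] gP(1) xS i by simp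
      then show "i \<in> S g" using m gP by simp
    qed
  qed
  have E': "S g = {i\<in>A. lam' i = lam' x}"
  proof
    show "S g \<subseteq> {i\<in>A. lam' i = lam' x}"
    proof
      fix i assume i: "i \<in> S g"
      have "lam' i = lam' x" using olp_index(2)[OF pt' gL(2) gL(2), of i x] i xS gP(2) by simp
      then show "i \<in> {i\<in>A. lam' i = lam' x}" using i SA by blast
    qed
    show "{i\<in>A. lam' i = lam' x} \<subseteq> S g"
    proof
      fix i assume i: "i \<in> {i\<in>A. lam' i = lam' x}"
      then obtain m where m: "m < length Ps'" "i \<in> Ps'!m" using olp_cover[OF pt'] by blast
      then have "m = g - 1" using olp_index(2)[OF pt' m(1) gL(2) m(2), of x] gP(2) xS i by simp
      then show "i \<in> S g" using m gP by simp
    qed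
  qed
  have M: "\<forall>i\<in>A. \<forall>j\<in>A. lam i < lam j \<longrightarrow> lam' i < lam' j"
  proof (intro ballI impI)
    fix i j assume ij: "i \<in> A" "j \<in> A" "lam i < lam j"
    obtain n where n: "n < length Ps" "i \<in> Ps!n" using olp_cover[OF pt ij(1)] by blast
    obtain m where m: "m < length Ps" "j \<in> Ps!m" using olp_cover[OF pt ij(2)] by blast
    have nm: "n < m" using olp_index(1)[OF pt n(1) m(1) n(2) m(2)] ij(3) by simp
    then have nk: "n < k - 1" using m lenP by simp
    have i': "i \<in> Ps'!n" using n Pn[OF nk] P'n[of n] nk by simp
    have n': "n < length Ps'" using nk lenP' by simp
    show "lam' i < lam' j"
    proof (cases "m < k - 1")
      case True
      have "j \<in> Ps'!m" using m Pn[OF True] P'n[of m] True by simp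
      then show ?thesis using olp_index(1)[OF pt' n' _ i', of m j] True nm lenP' by simp
    next
      case False
      then have "m = k - 1" using m lenP by simp
      then have jA': "j \<in> A'" using m Pk by simp
      show ?thesis
      proof (cases "j \<in> S k")
        case True
        then have "j \<in> Ps'!(k-1)" using P'k1 by simp
        then show ?thesis using olp_index(1)[OF pt' n' _ i', of "k-1" j] nk lenP' by simp
      next
        case False
        then have "j \<in> Ps'!k" using P'k jA' by simp
        then show ?thesis using olp_index(1)[OF pt' n' _ i', of "k" j] nk lenP' by simp
      qed
    qed
  qed
  show "(\<forall>X X'. lp_optimal A G C a r d lam X \<longrightarrow> lp_optimal A G C a r d lam' X' \<longrightarrow>
                    delay G d (S g) X = delay G d (S g) X') \<and>
           (\<forall>T. T \<subseteq> S g \<longrightarrow>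
              (GREATEST v. \<exists>X. lp_optimal A G C a r d lam X \<and> v = delay G d T X)
            = (GREATEST v. \<exists>X. lp_optimal A G C a r d lam' X \<and> v = delay G d T X))"
    by (rule main_abs[OF fin(1,2) ext lam_pos lam'_pos M xS SA E E'])
qed


end
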